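(* Let $t < n/2$. Then \[\mathrm{Span}\{ 1_{\mathcal{F}_T} \in \mathbb{R}[\mathcal{M}_{2n}] : T \text{ a set of } t \text{ pairwise disjoint edges of } K_{2n} \} \subseteq U_t,\] where $\mathcal{F}_T = \{m \in \mathcal{M}_{2n} : T \subseteq m\}$ and $1_{\mathcal{F}_T}$ is its characteristic function.
   Context: $\mathcal{M}_{2n}$ is the set of perfect matchings of the complete graph $K_{2n}$ on $[2n]$; $S_{2n}$ acts on $\mathcal{M}_{2n}$ by $\sigma m = \{\{\sigma(a),\sigma(b)\} : \{a,b\} \in m\}$. Let $m^* = \{\{1,2\},\{3,4\},\dots,\{2n-1,2n\}\}$. For $f \in \mathbb{R}[\mathcal{M}_{2n}]$ (real functions on $\mathcal{M}_{2n}$) define its lift $\tilde f \in \mathbb{R}[S_{2n}]$ by $\tilde f(\sigma) = f(\sigma m^* )$, and for an irreducible representation $\rho$ of $S_{2n}$ define the Fourier transform $\hat f(\rho) = \frac{1}{(2n)!}\sum_{\sigma \in S_{2n}} \tilde f(\sigma)\rho(\sigma)$. Irreducible representations of $S_{2n}$ are indexed by partitions of $2n$. Partitions of the same integer are ordered reverse-lexicographically: $\mu \leq \lambda$ iff $\mu = \lambda$ or $\mu_j < \lambda_j$ at the first index $j$ where they differ. For $\lambda=(\lambda_1,\dots,\lambda_k)$, $2\lambda = (2\lambda_1,\dots,2\lambda_k)$; in particular $2(n-t,1^t) = (2(n-t),2,\dots,2)$ with $t$ parts equal to $2$. Define $U_t = \{ f \in \mathbb{R}[\mathcal{M}_{2n}]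 : \hat f(\rho) = 0 \text{ for every irreducible } \rho \vdash 2n \text{ with } \rho < 2(n-t,1^t)\}$. *)

theory Defs
  imports "HOL-Analysis.Analysis" "HOL-Library.Function_Algebras"
begin

definition edges_K :: "nat \<Rightarrow> nat set set" where
  "edges_K n = {e. e \<subseteq> {1..2*n} \<and> card e = 2}"

definition matchings :: "nat \<Rightarrow> nat set set set" where
  "matchings n = {m. m \<subseteq> edges_K n \<and> (\<forall>k\<in>{1..2*n}. \<exists>!e. e \<in> m \<and> k \<in> e)}"

definition mstar :: "nat \<Rightarrow> nat set set" where
  "mstar n = {{2*i - 1, 2*i} | i. i \<in> {1..n}}"

definition act_matching :: "(nat \<Rightarrow> nat) \<Rightarrow> nat set set \<Rightarrow> nat set set" where
  "act_matching \<sigma> m = (\<lambda>e. \<sigma> ` e) ` m"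

definition lift :: "nat \<Rightarrow> (nat set set \<Rightarrow> real) \<Rightarrow> (nat \<Rightarrow> nat) \<Rightarrow> real" where
  "lift n f \<sigma> = f (act_matching \<sigma> (mstar n))"

definition is_partition :: "nat \<Rightarrow> nat list \<Rightarrow> bool" where
  "is_partition N lam \<longleftrightarrow> sorted (rev lam) \<and> (\<forall>x\<in>set lam. 0 < x) \<and> sum_list lam = N"

definition part :: "nat list \<Rightarrow> nat \<Rightarrow> nat" where
  "part lam i = (if i < length lam then lam ! i else 0)"

definition part_less :: "nat list \<Rightarrow> nat list \<Rightarrow> bool" where
  "part_less mu lam \<longleftrightarrow> (\<exists>j. (\<forall>i<j. part mu i = part lam i) \<and> part mu j < part lam j)"

definition young_cells :: "nat list \<Rightarrow> (nat \<times> nat) set" where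
  "young_cells lam = {(i, j). i < length lam \<and> j < lam ! i}"

definition is_tableau :: "nat \<Rightarrow> nat list \<Rightarrow> (nat \<times> nat \<Rightarrow> nat) \<Rightarrow> bool" where
  "is_tableau N lam t \<longleftrightarrow> bij_betw t (young_cells lam) {1..N}"

text \<open>A tabloid is represented by its row function: entry k is sent to the row containing it
  (and entries outside {1..N} to 0).\<close>
definition tabloid :: "nat \<Rightarrow> nat list \<Rightarrow> (nat \<times> nat \<Rightarrow> nat) \<Rightarrow> (nat \<Rightarrow> nat)" where
  "tabloid N lam t = (\<lambda>k. if k \<in> {1..N} then fst (inv_into (young_cells lam) t k) else 0)"

definition column_stab :: "nat \<Rightarrow> nat list \<Rightarrow> (nat \<times> nat \<Rightarrow> nat) \<Rightarrow> (nat \<Rightarrow> nat) set" where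
  "column_stab N lam t = {\<pi>. \<pi> permutes {1..N} \<and>
     (\<forall>k\<in>{1..N}. snd (inv_into (young_cells lam) t (\<pi> k)) = snd (inv_into (young_cells lam) t k))}"

definition polytabloid :: "nat \<Rightarrow> nat list \<Rightarrow> (nat \<times> nat \<Rightarrow> nat) \<Rightarrow> ((nat \<Rightarrow> nat) \<Rightarrow> real)" where
  "polytabloid N lam t = (\<lambda>r. \<Sum>\<pi>\<in>column_stab N lam t.
      of_int (sign \<pi>) * (if r = tabloid N lam (\<pi> \<circ> t) then 1 else 0))"

definition specht :: "nat \<Rightarrow> nat list \<Rightarrow> ((nat \<Rightarrow> nat) \<Rightarrow> real) set" where
  "specht N lam = module.span (\<lambda>c v x. c * v x) {polytabloid N lam t | t. is_tableau N lam t}"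

text \<open>Permutation action on M^lambda: sigma {t} = {sigma o t}, i.e. on row functions
  (sigma r)(k) = r (sigma^-1 k); extended linearly to functions on tabloids.\<close>
definition rep_act :: "(nat \<Rightarrow> nat) \<Rightarrow> ((nat \<Rightarrow> nat) \<Rightarrow> real) \<Rightarrow> ((nat \<Rightarrow> nat) \<Rightarrow> real)" where
  "rep_act \<sigma> v = (\<lambda>r. v (r \<circ> \<sigma>))"

text \<open>Fourier transform hat f(rho_lambda) as the operator on the Specht module S^lambda;
  it vanishes iff it sends every vector of S^lambda to 0.\<close>
definition fourier_zero :: "nat \<Rightarrow> (nat set set \<Rightarrow> real) \<Rightarrow> nat list \<Rightarrow> bool" where
  "fourier_zero n f lam \<longleftrightarrow> (\<forall>v\<in>specht (2*n) lam.
     (\<lambda>r. (1 / fact (2*n)) * (\<Sum>\<sigma>\<in>{\<sigma>. \<sigma> permutes {1..2*n}}. lift n f \<sigma> * rep_act \<sigma> v r)) = (\<lambda>_. 0))"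

definition U :: "nat \<Rightarrow> nat \<Rightarrow> (nat set set \<Rightarrow> real) set" where
  "U n t = {f. \<forall>\<rho>. is_partition (2*n) \<rho> \<and> part_less \<rho> (2*(n-t) # replicate t 2) \<longrightarrow> fourier_zero n f \<rho>}"

definition family :: "nat \<Rightarrow> nat set set \<Rightarrow> nat set set set" where
  "family n T = {m \<in> matchings n. T \<subseteq> m}"

end

theory Submission
  imports Defs
begin

lemma counting:
  fixes n t :: nat and T :: "nat set set" and \<rho> :: "nat list" and g :: "nat \<Rightarrow> nat \<times> nat"
  assumes nt: "2*t < n" and TE: "T \<subseteq> edges_K n" and cT: "card T = t"
    and disj: "\<forall>e\<in>T. \<forall>e'\<in>T. e\<noteq>e' \<longrightarrow> e\<inter>e' = {}"
    and part: "is_partition (2*n) \<rho>" and less: "part_less \<rho> (2*(n-t) # replicate t 2)"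
    and ginj: "inj_on g {1..2*n}" and gim: "g ` {1..2*n} \<subseteq> young_cells \<rho>"
  shows "\<exists>a b. a\<in>{1..2*n} \<and> b\<in>{1..2*n} \<and> a\<noteq>b \<and> (\<forall>e\<in>T. a\<in>e \<longleftrightarrow> b\<in>e) \<and> snd (g a) = snd (g b)"
proof (rule ccontr)
  assume "\<not> ?thesis"
  hence noP: "\<And>a b. a\<in>{1..2*n} \<Longrightarrow> b\<in>{1..2*n} \<Longrightarrow> a\<noteq>b \<Longrightarrow> (\<forall>e\<in>T. a\<in>e \<longleftrightarrow> b\<in>e) \<Longrightarrow> snd (g a) \<noteq> snd (g b)"
    by blast
  define m where "m = 2*(n-t)"
  define B0 where "B0 = {1..2*n} - \<Union>T"
  have sorted: "sorted (rev \<rho>)" using part unfolding is_partition_def by blast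
  have Tsub: "\<And>e. e \<in> T \<Longrightarrow> e \<subseteq> {1..2*n} \<and> card e = 2" using TE unfolding edges_K_def by blast
  have finT: "finite T"
  proof (rule finite_subset)
    show "T \<subseteq> Pow {1..2*n}" using Tsub by blast
  qed simp
  have UT: "\<Union>T \<subseteq> {1..2*n}" using Tsub by blast
  have cardUT: "card (\<Union>T) = 2*t"
  proof -
    have "card (\<Union>T) = sum card T"
      apply (rule card_Union_disjoint)
      using disj unfolding pairwise_def disjnt_def apply blast
      using Tsub by (meson finite_atLeastAtMost finite_subset)
    also have "\<dots> = sum (\<lambda>_. 2) T" using Tsub by (intro sum.cong) auto
    finally show ?thesis using cT by simp
  qed
  have cardB0: "card B0 = m" unfolding B0_def m_def
    using card_Diff_subset[OF finite_subset[OF UT] UT] cardUT by simp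
  have injB0: "inj_on (snd \<circ> g) B0"
  proof (rule inj_onI)
    fix a b assume ab: "a \<in> B0" "b \<in> B0" "(snd \<circ> g) a = (snd \<circ> g) b"
    show "a = b"
    proof (rule ccontr)
      assume "a \<noteq> b"
      moreover have "\<forall>e\<in>T. a\<in>e \<longleftrightarrow> b\<in>e" using ab unfolding B0_def by blast
      moreover have "a \<in> {1..2*n}" "b \<in> {1..2*n}" using ab unfolding B0_def by auto
      ultimately show False using noP ab(3) by auto
    qed
  qed
  have finB0: "finite B0" unfolding B0_def by simp
  have B0sub: "B0 \<subseteq> {1..2*n}" unfolding B0_def by blast
  have cellsD: "\<And>i c. (i,c) \<in> young_cells \<rho> \<Longrightarrow> i < length \<rho> \<and> c < \<rho>!i"
    unfolding young_cells_def by auto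
  have row0: "\<And>i. i < length \<rho> \<Longrightarrow> \<rho>!i \<le> part \<rho> 0"
    using sorted_rev_nth_mono[OF sorted] unfolding part_def by auto
  from less obtain j where jeq: "\<forall>i<j. part \<rho> i = part (2*(n-t) # replicate t 2) i"
    and jlt: "part \<rho> j < part (2*(n-t) # replicate t 2) j" unfolding part_less_def by blast
  have pmu: "part (2*(n-t) # replicate t 2) i = (if i = 0 then m else if i \<le> t then 2 else 0)" for i
    unfolding part_def m_def by (cases i) auto
  show False
  proof (cases "j = 0")
    case True
    hence "part \<rho> 0 < m" using jlt pmu by simp
    have sub0: "(snd \<circ> g) ` B0 \<subseteq> {..<part \<rho> 0}"
    proof
      fix x assume "x \<in> (snd \<circ> g) ` B0"
      then obtain k where k: "k \<in> B0" "x = snd (g k)" by auto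
      obtain i c where ic: "g k = (i,c)" by (cases "g k")
      have "g k \<in> g ` {1..2*n}" using B0sub k(1) by blast
      hence "(i,c) \<in> young_cells \<rho>" using gim ic by auto
      from cellsD[OF this] have "i < length \<rho>" "c < \<rho>!i" by auto
      with row0[of i] have "c < part \<rho> 0" by simp
      thus "x \<in> {..<part \<rho> 0}" using k ic by simp
    qed
    have "card B0 \<le> card {..<part \<rho> 0}" using card_inj_on_le[OF injB0 sub0] by simp
    thus False using cardB0 \<open>part \<rho> 0 < m\<close> by simp
  next
    case False
    have jt: "j \<le> t" using jlt pmu False by (cases "j \<le> t") auto
    have p0: "part \<rho> 0 = m" using jeq False pmu by auto
    have pi: "\<And>i. 1 \<le> i \<Longrightarrow> i < j \<Longrightarrow> part \<rho> i = 2" using jeq pmu jt by auto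
    have pj: "part \<rho> j \<le> 1" using jlt pmu jt False by auto
    define Z where "Z = {p\<in>young_cells \<rho>. 1 \<le> snd p}"
    have Zsub: "Z \<subseteq> (\<lambda>c. (0,c)) ` {1..<m} \<union> (\<lambda>i. (i,1)) ` {1..<j}"
    proof
      fix p assume "p \<in> Z"
      then obtain i c where p: "p = (i,c)" "(i,c) \<in> young_cells \<rho>" "1 \<le> c" unfolding Z_def by (cases p) auto
      from cellsD[OF p(2)] have ic: "i < length \<rho>" "c < \<rho>!i" by auto
      have "i < j"
      proof (rule ccontr)
        assume "\<not> i < j"
        hence "\<rho>!i \<le> \<rho>!j" using sorted_rev_nth_mono[OF sorted, of j i] ic by auto
        moreover have "\<rho>!j = part \<rho> j" using \<open>\<not> i < j\<close> ic unfolding part_def by auto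
        ultimately show False using pj ic p by auto
      qed
      show "p \<in> (\<lambda>c. (0,c)) ` {1..<m} \<union> (\<lambda>i. (i,1)) ` {1..<j}"
      proof (cases "i = 0")
        case True
        hence "c < m" using ic p0 unfolding part_def by auto
        thus ?thesis using p True by auto
      next
        case False
        hence "\<rho>!i = 2" using pi[of i] \<open>i<j\<close> ic unfolding part_def by auto
        hence "c = 1" using ic p by auto
        thus ?thesis using p False \<open>i<j\<close> by auto
      qed
    qed
    have cardZ: "card Z \<le> (m-1)+(j-1)"
    proof -
      have "card Z \<le> card ((\<lambda>c. (0::nat,c)) ` {1..<m} \<union> (\<lambda>i. (i,1::nat)) ` {1..<j})"
        by (rule card_mono[OF _ Zsub]) simp
      also have "\<dots> \<le> card ((\<lambda>c. (0::nat,c)) ` {1..<m}) + card ((\<lambda>i. (i,1::nat)) ` {1..<j})"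
        by (rule card_Un_le)
      also have "\<dots> \<le> card {1..<m} + card {1..<j}"
        by (intro add_mono card_image_le) auto
      finally show ?thesis by simp
    qed
    define Q where "Q = {k\<in>{1..2*n}. 1 \<le> snd (g k)}"
    have finZ: "finite Z"
    proof (rule finite_subset[OF Zsub]) qed simp
    have cQ: "card Q \<le> card Z"
    proof (rule card_inj_on_le)
      show "inj_on g Q" using ginj unfolding Q_def by (rule inj_on_subset) auto
      show "g ` Q \<subseteq> Z" unfolding Q_def Z_def using gim by auto
    qed (rule finZ)
    have cB0Q: "card (B0 - Q) \<le> 1"
    proof -
      have "card (B0 - Q) \<le> card {0::nat}"
      proof (rule card_inj_on_le)
        show "inj_on (snd \<circ> g) (B0 - Q)" using injB0 by (rule inj_on_subset) auto
        show "(snd \<circ> g) ` (B0 - Q) \<subseteq> {0}" unfolding Q_def using B0sub by auto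
      qed simp
      thus ?thesis by simp
    qed
    have c1: "m - 1 \<le> card (B0 \<inter> Q)"
    proof -
      have "card B0 = card (B0 \<inter> Q) + card (B0 - Q)"
        using finB0 by (metis card_Int_Diff finB0)
      thus ?thesis using cB0Q cardB0 by simp
    qed
    have eQ: "e \<inter> Q \<noteq> {}" if e: "e \<in> T" for e
    proof -
      from Tsub[OF e] obtain a b where ab: "a \<noteq> b" "e = {a,b}" "e \<subseteq> {1..2*n}"
        by (meson card_2_iff)
      have "\<forall>e'\<in>T. a\<in>e' \<longleftrightarrow> b\<in>e'"
      proof
        fix e' assume e': "e' \<in> T"
        show "a\<in>e' \<longleftrightarrow> b\<in>e'"
        proof (cases "e' = e")
          case True thus ?thesis using ab by simp
        next
          case False
          hence "e \<inter> e' = {}" using disj e e' by blast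
          thus ?thesis using ab(2) by auto
        qed
      qed
      hence "snd (g a) \<noteq> snd (g b)" using noP ab by auto
      hence "a \<in> Q \<or> b \<in> Q" using ab unfolding Q_def by auto
      thus ?thesis using ab by auto
    qed
    define h where "h e = (SOME k. k \<in> e \<inter> Q)" for e
    have h: "\<And>e. e \<in> T \<Longrightarrow> h e \<in> e \<inter> Q" unfolding h_def using eQ by (metis all_not_in_conv someI_ex)
    have c2: "t \<le> card (\<Union>T \<inter> Q)"
    proof -
      have "card T \<le> card (\<Union>T \<inter> Q)"
      proof (rule card_inj_on_le)
        show "inj_on h T"
        proof (rule inj_onI)
          fix e e' assume ee: "e \<in> T" "e' \<in> T" "h e = h e'"
          have "h e \<in> e \<inter> e'" using h[OF ee(1)] h[OF ee(2)] ee(3) by simp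
          thus "e = e'" using disj ee(1,2) by blast
        qed
        show "h ` T \<subseteq> \<Union>T \<inter> Q" using h by blast
        show "finite (\<Union>T \<inter> Q)" unfolding Q_def by simp
      qed
      thus ?thesis using cT by simp
    qed
    have "card (B0 \<inter> Q) + card (\<Union>T \<inter> Q) = card ((B0 \<inter> Q) \<union> (\<Union>T \<inter> Q))"
      by (rule card_Un_disjoint[symmetric]) (auto simp: B0_def Q_def)
    also have "\<dots> \<le> card Q" by (rule card_mono) (auto simp: Q_def)
    finally have "m - 1 + t \<le> card Q" using c1 c2 by linarith
    moreover have "m \<ge> 2" using nt unfolding m_def by simp
    ultimately show False using cQ cardZ jt False by linarith
  qed
qed

lemma tab_comp:
  assumes X: "bij_betw X (young_cells lam) {1..N}" and ab: "a \<in> {1..N}" "b \<in> {1..N}"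
  shows "tabloid N lam (Transposition.transpose a b \<circ> X) = tabloid N lam X \<circ> Transposition.transpose a b"
proof
  fix k
  let ?c = "Transposition.transpose a b"
  have cN: "?c k \<in> {1..N} \<longleftrightarrow> k \<in> {1..N}" using ab by (cases "k = a"; cases "k = b") auto
  show "tabloid N lam (?c \<circ> X) k = (tabloid N lam X \<circ> ?c) k"
  proof (cases "k \<in> {1..N}")
    case True
    have inj: "inj_on (?c \<circ> X) (young_cells lam)"
      using X by (simp add: bij_betw_def comp_inj_on)
    have "?c k \<in> X ` young_cells lam" using X True cN by (simp add: bij_betw_def)
    hence x: "inv_into (young_cells lam) X (?c k) \<in> young_cells lam"
      "X (inv_into (young_cells lam) X (?c k)) = ?c k"
      by (auto intro: inv_into_into f_inv_into_f)
    have "inv_into (young_cells lam) (?c \<circ> X) k = inv_into (young_cells lam) X (?c k)"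
      by (rule inv_into_f_eq[OF inj x(1)]) (simp add: x(2))
    thus ?thesis using True cN unfolding tabloid_def by simp
  next
    case False
    have F2: "?c k \<notin> {1..N}" using False cN by blast
    show ?thesis unfolding tabloid_def comp_def
      by (subst if_not_P[OF False], subst if_not_P[OF F2]) (rule refl)
  qed
qed

lemma poly_anti:
  assumes tau: "is_tableau N lam \<tau>" and ab: "a \<in> {1..N}" "b \<in> {1..N}" "a \<noteq> b"
    and col: "snd (inv_into (young_cells lam) \<tau> a) = snd (inv_into (young_cells lam) \<tau> b)"
  shows "polytabloid N lam \<tau> (r \<circ> Transposition.transpose a b) = - polytabloid N lam \<tau> r"
proof -
  let ?c = "Transposition.transpose a b"
  let ?C = "column_stab N lam \<tau>"
  let ?col = "\<lambda>k. snd (inv_into (young_cells lam) \<tau> k)"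
  have cperm: "?c permutes {1..N}" using ab by (simp add: permutes_swap_id)
  have ccol: "?col (?c k) = ?col k" for k using col by (cases "k = a"; cases "k = b") auto
  have cC: "?c \<circ> \<pi> \<in> ?C" if "\<pi> \<in> ?C" for \<pi>
  proof -
    have "\<pi> permutes {1..N}" using that unfolding column_stab_def by blast
    hence "?c \<circ> \<pi> permutes {1..N}" using cperm by (simp add: permutes_compose)
    moreover have "\<forall>k\<in>{1..N}. ?col ((?c \<circ> \<pi>) k) = ?col k"
      using that ccol unfolding column_stab_def by simp
    ultimately show ?thesis unfolding column_stab_def by blast
  qed
  have sgn: "sign (?c \<circ> \<pi>) = - sign \<pi>" if "\<pi> \<in> ?C" for \<pi>
  proof -
    have "\<pi> permutes {1..N}" using that unfolding column_stab_def by blast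
    hence "permutation \<pi>" using permutation_permutes by blast
    moreover have "permutation ?c" using cperm permutation_permutes by blast
    ultimately show ?thesis using ab by (simp add: sign_compose sign_swap_id)
  qed
  have eq: "(r \<circ> ?c = tabloid N lam (?c \<circ> (\<pi> \<circ> \<tau>))) \<longleftrightarrow> (r = tabloid N lam (\<pi> \<circ> \<tau>))"
    if "\<pi> \<in> ?C" for \<pi>
  proof -
    have "\<pi> permutes {1..N}" using that unfolding column_stab_def by blast
    hence "bij_betw (\<pi> \<circ> \<tau>) (young_cells lam) {1..N}"
      using tau unfolding is_tableau_def by (meson bij_betw_trans permutes_imp_bij)
    hence "tabloid N lam (?c \<circ> (\<pi> \<circ> \<tau>)) = tabloid N lam (\<pi> \<circ> \<tau>) \<circ> ?c"
      using tab_comp ab by blast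
    moreover have "(r \<circ> ?c = s \<circ> ?c) \<longleftrightarrow> r = s" for s :: "nat \<Rightarrow> nat"
      by (metis comp_assoc comp_id transpose_comp_involutory)
    ultimately show ?thesis by simp
  qed
  have "polytabloid N lam \<tau> (r \<circ> ?c) =
      (\<Sum>\<pi>\<in>?C. of_int (sign \<pi>) * (if r \<circ> ?c = tabloid N lam (\<pi> \<circ> \<tau>) then 1 else 0))"
    unfolding polytabloid_def by simp
  also have "\<dots> = (\<Sum>\<pi>\<in>?C. of_int (sign (?c \<circ> \<pi>)) * (if r \<circ> ?c = tabloid N lam ((?c \<circ> \<pi>) \<circ> \<tau>) then 1 else 0))"
    by (rule sum.reindex_bij_witness[of _ "\<lambda>\<pi>. ?c \<circ> \<pi>" "\<lambda>\<pi>. ?c \<circ> \<pi>"])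
       (auto simp: cC comp_assoc[symmetric])
  also have "\<dots> = (\<Sum>\<pi>\<in>?C. - (of_int (sign \<pi>) * (if r = tabloid N lam (\<pi> \<circ> \<tau>) then 1 else 0)))"
    by (rule sum.cong) (auto simp: sgn eq comp_assoc)
  also have "\<dots> = - polytabloid N lam \<tau> r"
    unfolding polytabloid_def by (simp add: sum_negf)
  finally show ?thesis .
qed

lemma transpose_image_fix:
  assumes ab: "a \<in> e \<longleftrightarrow> b \<in> e"
  shows "Transposition.transpose a b ` e = e"
proof -
  have *: "Transposition.transpose a b x \<in> e \<longleftrightarrow> x \<in> e" for x
  proof (cases "x = a")
    case True thus ?thesis using ab by simp
  next
    case False
    show ?thesis
    proof (cases "x = b")
      case True thus ?thesis using ab by simp
    next
      case False2: False
      thus ?thesis using False by simp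
    qed
  qed
  show ?thesis by (simp add: set_eq_iff in_transpose_image_iff *)
qed

lemma act_comp: "act_matching (p \<circ> q) M = act_matching p (act_matching q M)"
  unfolding act_matching_def by (simp add: image_image image_comp)

lemma act_match:
  assumes p: "p permutes {1..2*n}" and M: "M \<in> matchings n"
  shows "act_matching p M \<in> matchings n"
proof -
  have bij: "bij p" using p by (rule permutes_bij)
  have inj: "inj p" using bij bij_is_inj by blast
  have Msub: "M \<subseteq> edges_K n" and Mu: "\<forall>k\<in>{1..2*n}. \<exists>!e. e \<in> M \<and> k \<in> e"
    using M unfolding matchings_def by auto
  have A: "act_matching p M \<subseteq> edges_K n"
  proof
    fix e' assume "e' \<in> act_matching p M"
    then obtain e where e: "e \<in> M" "e' = p ` e" unfolding act_matching_def by auto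
    have "e \<subseteq> {1..2*n}" "card e = 2" using Msub e(1) unfolding edges_K_def by auto
    moreover have "p ` e \<subseteq> {1..2*n}" using calculation(1) permutes_image[OF p]
      by (metis image_mono)
    moreover have "card (p ` e) = card e" using inj by (simp add: card_image inj_on_subset)
    ultimately show "e' \<in> edges_K n" using e unfolding edges_K_def by simp
  qed
  have B: "\<exists>!e'. e' \<in> act_matching p M \<and> k \<in> e'" if k: "k \<in> {1..2*n}" for k
  proof -
    have ik: "inv p k \<in> {1..2*n}" using permutes_in_image[OF permutes_inv[OF p]] k by blast
    then obtain e where e: "e \<in> M" "inv p k \<in> e" and uq: "\<And>e2. e2 \<in> M \<Longrightarrow> inv p k \<in> e2 \<Longrightarrow> e2 = e"
      using Mu by metis
    have pk: "p (inv p k) = k" using permutes_inverses(1)[OF p] by blast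
    show ?thesis
    proof
      show "p ` e \<in> act_matching p M \<and> k \<in> p ` e"
        using e pk unfolding act_matching_def by (metis image_eqI)
      fix e' assume e': "e' \<in> act_matching p M \<and> k \<in> e'"
      then obtain e2 where e2: "e2 \<in> M" "e' = p ` e2" unfolding act_matching_def by auto
      have "inv p k \<in> e2" using e' e2 inj by (metis imageE inv_f_f)
      thus "e' = p ` e" using uq e2 by simp
    qed
  qed
  show ?thesis unfolding matchings_def mem_Collect_eq using A B by (intro conjI ballI)
qed

lemma F_inv:
  assumes ab: "a \<in> {1..2*n}" "b \<in> {1..2*n}" and T: "\<forall>e\<in>T. a\<in>e \<longleftrightarrow> b\<in>e"
  shows "indicator (family n T) (act_matching (Transposition.transpose a b) M) =
         (indicator (family n T) M :: real)"
proof -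
  let ?s = "Transposition.transpose a b"
  have sp: "?s permutes {1..2*n}" using ab by (simp add: permutes_swap_id)
  have ss: "act_matching ?s (act_matching ?s M) = M"
    unfolding act_comp[symmetric] by (simp add: act_matching_def)
  have mem: "X \<in> act_matching ?s M \<longleftrightarrow> ?s ` X \<in> M" for X
  proof
    assume "X \<in> act_matching ?s M"
    then obtain Y where "Y \<in> M" "X = ?s ` Y" unfolding act_matching_def by auto
    thus "?s ` X \<in> M" by (simp add: image_comp)
  next
    assume "?s ` X \<in> M"
    moreover have "X = ?s ` (?s ` X)" by (simp add: image_comp)
    ultimately show "X \<in> act_matching ?s M" unfolding act_matching_def by blast
  qed
  have Tiff: "T \<subseteq> act_matching ?s M \<longleftrightarrow> T \<subseteq> M"
    using mem transpose_image_fix T by auto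
  have Miff: "act_matching ?s M \<in> matchings n \<longleftrightarrow> M \<in> matchings n"
    using act_match[OF sp, of M] act_match[OF sp, of "act_matching ?s M"] ss by auto
  show ?thesis unfolding indicator_def family_def by (simp only: mem_Collect_eq Tiff Miff)
qed

lemma core:
  fixes n t :: nat and T :: "nat set set" and \<rho> :: "nat list" and \<tau> :: "nat \<times> nat \<Rightarrow> nat"
  assumes nt: "2*t < n" and TE: "T \<subseteq> edges_K n" and cT: "card T = t"
    and disj: "\<forall>e\<in>T. \<forall>e'\<in>T. e\<noteq>e' \<longrightarrow> e\<inter>e' = {}"
    and part: "is_partition (2*n) \<rho>" and less: "part_less \<rho> (2*(n-t) # replicate t 2)"
    and tau: "is_tableau (2*n) \<rho> \<tau>"
  shows "(\<Sum>\<sigma>\<in>{\<sigma>. \<sigma> permutes {1..2*n}}. lift n (indicator (family n T)) \<sigma> * rep_act \<sigma> (polytabloid (2*n) \<rho> \<tau>) r) = 0"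
proof -
  let ?S = "{\<sigma>. \<sigma> permutes {1..2*n}}"
  let ?cells = "young_cells \<rho>"
  define G where "G \<sigma> = lift n (indicator (family n T)) \<sigma> * rep_act \<sigma> (polytabloid (2*n) \<rho> \<tau>) r" for \<sigma>
  define \<phi> where "\<phi> \<sigma> k = snd (inv_into ?cells \<tau> (inv \<sigma> k))" for \<sigma> :: "nat \<Rightarrow> nat" and k
  define P where "P \<sigma> = {(a,b). a\<in>{1..2*n} \<and> b\<in>{1..2*n} \<and> a\<noteq>b \<and> (\<forall>e\<in>T. a\<in>e\<longleftrightarrow>b\<in>e) \<and> \<phi> \<sigma> a = \<phi> \<sigma> b}" for \<sigma>
  define sel where "sel \<sigma> = (SOME p. p \<in> P \<sigma>)" for \<sigma>
  define \<iota> where "\<iota> \<sigma> = Transposition.transpose (fst (sel \<sigma>)) (snd (sel \<sigma>)) \<circ> \<sigma>" for \<sigma>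
  have tbij: "bij_betw \<tau> ?cells {1..2*n}" using tau unfolding is_tableau_def .
  have ibij: "bij_betw (inv_into ?cells \<tau>) {1..2*n} ?cells" using bij_betw_inv_into[OF tbij] .
  have Pne: "P \<sigma> \<noteq> {}" if s: "\<sigma> \<in> ?S" for \<sigma>
  proof -
    have sp: "\<sigma> permutes {1..2*n}" using s by simp
    have ip: "inv \<sigma> permutes {1..2*n}" using permutes_inv[OF sp] .
    have im: "inv \<sigma> ` {1..2*n} = {1..2*n}" using permutes_image[OF ip] .
    let ?g = "\<lambda>k. inv_into ?cells \<tau> (inv \<sigma> k)"
    have ginj: "inj_on ?g {1..2*n}"
    proof -
      have "inj_on (inv \<sigma>) {1..2*n}" using permutes_inj_on[OF ip] .
      moreover have "inj_on (inv_into ?cells \<tau>) (inv \<sigma> ` {1..2*n})"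
        using ibij im by (simp add: bij_betw_def)
      ultimately show ?thesis using comp_inj_on[of "inv \<sigma>" "{1..2*n}" "inv_into ?cells \<tau>"]
        by (simp add: o_def)
    qed
    have gim: "?g ` {1..2*n} \<subseteq> ?cells"
    proof -
      have "?g ` {1..2*n} = inv_into ?cells \<tau> ` (inv \<sigma> ` {1..2*n})" by (simp only: image_image)
      also have "\<dots> = ?cells" using im ibij by (simp add: bij_betw_def)
      finally show ?thesis by simp
    qed
    from counting[OF nt TE cT disj part less ginj gim] obtain a b where
      "a\<in>{1..2*n}" "b\<in>{1..2*n}" "a\<noteq>b" "\<forall>e\<in>T. a\<in>e \<longleftrightarrow> b\<in>e"
      "snd (?g a) = snd (?g b)" by blast
    hence "(a,b) \<in> P \<sigma>" unfolding P_def \<phi>_def by simp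
    thus ?thesis by blast
  qed
  have selP: "sel \<sigma> \<in> P \<sigma>" if "\<sigma> \<in> ?S" for \<sigma>
    using Pne[OF that] unfolding sel_def by (simp add: some_in_eq)
  have key: "\<iota> \<sigma> \<in> ?S \<and> \<iota> (\<iota> \<sigma>) = \<sigma> \<and> G (\<iota> \<sigma>) = - G \<sigma>" if s: "\<sigma> \<in> ?S" for \<sigma>
  proof -
    obtain a b where ab: "sel \<sigma> = (a,b)" by (cases "sel \<sigma>")
    have abP: "a\<in>{1..2*n}" "b\<in>{1..2*n}" "a\<noteq>b" "\<forall>e\<in>T. a\<in>e\<longleftrightarrow>b\<in>e" "\<phi> \<sigma> a = \<phi> \<sigma> b"
      using selP[OF s] ab unfolding P_def by auto
    let ?s = "Transposition.transpose a b"
    have sp: "\<sigma> permutes {1..2*n}" using s by simp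
    have ip: "inv \<sigma> permutes {1..2*n}" using permutes_inv[OF sp] .
    have ssp: "?s permutes {1..2*n}" using abP by (simp add: permutes_swap_id)
    have iss: "\<iota> \<sigma> = ?s \<circ> \<sigma>" unfolding \<iota>_def ab by simp
    have mem: "\<iota> \<sigma> \<in> ?S" using permutes_compose[OF sp ssp] iss by simp
    have bijs: "bij \<sigma>" using permutes_bij[OF sp] .
    have invi: "inv (?s \<circ> \<sigma>) = inv \<sigma> \<circ> ?s"
      using o_inv_distrib[OF bij_transpose bijs] by simp
    have phieq: "\<phi> (\<iota> \<sigma>) = \<phi> \<sigma>"
    proof
      fix k
      have "\<phi> (\<iota> \<sigma>) k = \<phi> \<sigma> (?s k)" unfolding \<phi>_def iss invi by simp
      also have "\<dots> = \<phi> \<sigma> k"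
      proof (cases "k = a")
        case True thus ?thesis using abP by simp
      next
        case False
        thus ?thesis using abP by (cases "k = b") auto
      qed
      finally show "\<phi> (\<iota> \<sigma>) k = \<phi> \<sigma> k" .
    qed
    have "P (\<iota> \<sigma>) = P \<sigma>" unfolding P_def phieq ..
    hence selq: "sel (\<iota> \<sigma>) = sel \<sigma>" unfolding sel_def by simp
    have "\<iota> (\<iota> \<sigma>) = ?s \<circ> \<iota> \<sigma>"
      by (simp only: \<iota>_def[of "\<iota> \<sigma>"] selq ab fst_conv snd_conv)
    also have "\<dots> = \<sigma>" unfolding iss by (simp add: comp_assoc[symmetric])
    finally have inv2: "\<iota> (\<iota> \<sigma>) = \<sigma>" .
    have L: "lift n (indicator (family n T)) (\<iota> \<sigma>) = lift n (indicator (family n T)) \<sigma>"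
      unfolding lift_def iss act_comp using F_inv[OF abP(1,2,4)] by simp
    let ?a' = "inv \<sigma> a" and ?b' = "inv \<sigma> b"
    have a'b': "?a' \<in> {1..2*n}" "?b' \<in> {1..2*n}" "?a' \<noteq> ?b'"
      using permutes_in_image[OF ip] abP(1,2,3) permutes_inj[OF ip] by (auto dest: injD)
    have col: "snd (inv_into ?cells \<tau> ?a') = snd (inv_into ?cells \<tau> ?b')"
      using abP(5) unfolding \<phi>_def .
    have sc: "?s \<circ> \<sigma> = \<sigma> \<circ> Transposition.transpose ?a' ?b'"
      using transpose_comp_eq[OF bijs] .
    have R: "rep_act (\<iota> \<sigma>) (polytabloid (2*n) \<rho> \<tau>) r = - rep_act \<sigma> (polytabloid (2*n) \<rho> \<tau>) r"
    proof -
      have "rep_act (\<iota> \<sigma>) (polytabloid (2*n) \<rho> \<tau>) r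
          = polytabloid (2*n) \<rho> \<tau> ((r \<circ> \<sigma>) \<circ> Transposition.transpose ?a' ?b')"
        unfolding rep_act_def iss sc by (simp add: comp_assoc)
      also have "\<dots> = - polytabloid (2*n) \<rho> \<tau> (r \<circ> \<sigma>)"
        by (rule poly_anti[OF tau a'b' col])
      finally show ?thesis unfolding rep_act_def .
    qed
    have "G (\<iota> \<sigma>) = - G \<sigma>" unfolding G_def L R by simp
    thus ?thesis using mem inv2 by blast
  qed
  have "sum G ?S = sum (\<lambda>\<sigma>. - G \<sigma>) ?S"
    by (rule sum.reindex_bij_witness[of _ \<iota> \<iota>]) (use key in auto)
  hence "sum G ?S = 0" by (simp add: sum_negf)
  thus ?thesis unfolding G_def .
qed

lemma sum_fun_apply: "finite A \<Longrightarrow> (\<Sum>a\<in>A. f a) x = (\<Sum>a\<in>A. f a x)"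
  by (induction A rule: finite_induct) (auto simp: plus_fun_apply)

lemma mod_fun: "module (\<lambda>(c::real) (g::'a \<Rightarrow> real) x. c * g x)"
  by unfold_locales (auto simp: fun_eq_iff algebra_simps plus_fun_apply)

lemma span_elim:
  assumes "v \<in> module.span (\<lambda>(c::real) (g::'a\<Rightarrow>real) x. c * g x) S"
  shows "\<exists>A u. finite A \<and> A \<subseteq> S \<and> (\<forall>x. v x = (\<Sum>a\<in>A. u a * a x))"
proof -
  from assms obtain A u where A: "finite A" "A \<subseteq> S" "v = (\<Sum>a\<in>A. (\<lambda>x. u a * a x))"
    unfolding module.span_explicit[OF mod_fun] by blast
  have "\<forall>x. v x = (\<Sum>a\<in>A. u a * a x)"
    using A(3) sum_fun_apply[OF A(1), of "\<lambda>a x. u a * a x"] by simp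
  thus ?thesis using A(1,2) by blast
qed

theorem mainTheorem2:
  fixes n t :: nat
  assumes "2 * t < n"
  shows "module.span (\<lambda>c g x. c * g x)
           {indicator (family n T) | T. T \<subseteq> edges_K n \<and> card T = t \<and>
              (\<forall>e\<in>T. \<forall>e'\<in>T. e \<noteq> e' \<longrightarrow> e \<inter> e' = {})}
         \<subseteq> U n t"
proof
  let ?Gen = "{indicator (family n T) | T. T \<subseteq> edges_K n \<and> card T = t \<and>
              (\<forall>e\<in>T. \<forall>e'\<in>T. e \<noteq> e' \<longrightarrow> e \<inter> e' = {})} :: (nat set set \<Rightarrow> real) set"
  let ?S = "{\<sigma>. \<sigma> permutes {1..2*n}}"
  fix f assume fin: "f \<in> module.span (\<lambda>c g x. c * g x) ?Gen"
  obtain A u where A: "finite A" "A \<subseteq> ?Gen" and fx: "\<forall>x. f x = (\<Sum>a\<in>A. u a * a x)"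
    using span_elim[OF fin] by blast
  show "f \<in> U n t" unfolding U_def mem_Collect_eq
  proof (intro allI impI)
    fix \<rho> assume rho: "is_partition (2*n) \<rho> \<and> part_less \<rho> (2*(n-t) # replicate t 2)"
    show "fourier_zero n f \<rho>" unfolding fourier_zero_def
    proof
      fix v assume vin: "v \<in> specht (2*n) \<rho>"
      obtain B w where B: "finite B" "B \<subseteq> {polytabloid (2*n) \<rho> \<tau> | \<tau>. is_tableau (2*n) \<rho> \<tau>}"
        and vx: "\<forall>x. v x = (\<Sum>p\<in>B. w p * p x)"
        using span_elim[OF vin[unfolded specht_def]] by blast
      have zero: "(\<Sum>\<sigma>\<in>?S. lift n a \<sigma> * rep_act \<sigma> p r) = 0" if a: "a \<in> A" and p: "p \<in> B" for a p r
      proof -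
        from a A obtain T where T: "a = indicator (family n T)" "T \<subseteq> edges_K n" "card T = t"
          "\<forall>e\<in>T. \<forall>e'\<in>T. e \<noteq> e' \<longrightarrow> e \<inter> e' = {}" by blast
        from p B obtain \<tau> where tau: "p = polytabloid (2*n) \<rho> \<tau>" "is_tableau (2*n) \<rho> \<tau>" by blast
        show ?thesis unfolding T(1) tau(1)
          using core[OF assms T(2,3,4) _ _ tau(2)] rho by blast
      qed
      have "(\<Sum>\<sigma>\<in>?S. lift n f \<sigma> * rep_act \<sigma> v r) = 0" for r
      proof -
        have lf: "lift n f \<sigma> = (\<Sum>a\<in>A. u a * lift n a \<sigma>)" for \<sigma>
          unfolding lift_def using fx by simp
        have rv: "rep_act \<sigma> v r = (\<Sum>p\<in>B. w p * rep_act \<sigma> p r)" for \<sigma>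
          unfolding rep_act_def using vx by simp
        have "(\<Sum>\<sigma>\<in>?S. lift n f \<sigma> * rep_act \<sigma> v r)
            = (\<Sum>\<sigma>\<in>?S. \<Sum>a\<in>A. \<Sum>p\<in>B. u a * w p * (lift n a \<sigma> * rep_act \<sigma> p r))"
          unfolding lf rv sum_product by (intro sum.cong refl) (simp add: algebra_simps)
        also have "\<dots> = (\<Sum>a\<in>A. \<Sum>p\<in>B. \<Sum>\<sigma>\<in>?S. u a * w p * (lift n a \<sigma> * rep_act \<sigma> p r))"
          by (subst sum.swap) (intro sum.cong refl, rule sum.swap)
        also have "\<dots> = (\<Sum>a\<in>A. \<Sum>p\<in>B. u a * w p * (\<Sum>\<sigma>\<in>?S. lift n a \<sigma> * rep_act \<sigma> p r))"
          by (simp add: sum_distrib_left)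
        also have "\<dots> = 0" using zero by simp
        finally show ?thesis .
      qed
      thus "(\<lambda>r. 1 / fact (2*n) * (\<Sum>\<sigma>\<in>?S. lift n f \<sigma> * rep_act \<sigma> v r)) = (\<lambda>_. 0)"
        by simp
    qed
  qed
qed

end
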